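(* Let $\mathcal{A}$ be a family of nonempty subsets of $\mathbb{R}^n$ closed under linear combinations, and let $\mathcal{F}:\mathcal{A}\to\mathbb{R}_{\geqslant0}$ be increasing under set inclusion and sub-homogeneous of degree $1/\alpha$ for some $\alpha>0$. Let $K,L\in\mathcal{A}$ with $\mathcal{F}(K)\mathcal{F}(L)>0$ satisfy, for all $\lambda\in(0,1)$, \[ \mathcal{F}\bigl((1-\lambda)K+\lambda L\bigr)\geqslant C\bigl((1-\lambda)\mathcal{F}(K)^\alpha+\lambda\mathcal{F}(L)^\alpha\bigr)^{1/\alpha}\qquad(\ast) \] for some constant $C>0$. Then for any $p\geqslant1$ and all $\lambda\in(0,1)$, \[ \mathcal{F}\bigl((1-\lambda)\cdot K+_p\lambda\cdot L\bigr)\geqslant C\bigl((1-\lambda)\mathcal{F}(K)^{p\alpha}+\lambda\mathcal{F}(L)^{p\alpha}\bigr)^{1/(p\alpha)} \] whenever $(1-\lambda)\cdot K+_p\lambda\cdot L\in\mathcal{A}$. Moreover, if equality holds for some $\lambda\in(0,1)$ and $p>1$, then $K,L$ satisfy $(\ast)$ with equality for some $\bar\lambda\in(0,1)$; if in addition $\mathcal{F}$ is strictly increasing and $K,L$ are compact, then $\mathrm{conv}\,K$ and $\mathrm{conv}\,L$ contain the origin and are dilatates of each other; and if furthermore $\mathcal{F}$ is strictly sub-homogeneous of degree $1/\alpha$, then $\mathrm{conv}\,K=\mathrm{conv}\,L$.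
   Context: A functional $\mathcal{F}:\mathcal{A}\to\mathbb{R}_{\geqslant0}$ on a family closed under dilatations is sub-homogeneous of degree $1/\alpha$ ($\alpha\neq0$) if $\mathcal{F}(rK)\leqslant r^{1/\alpha}\mathcal{F}(K)$ for all $r\geqslant1$, and strictly sub-homogeneous if the inequality is strict whenever $\mathcal{F}(K)>0$ and $r>1$. Strictly increasing means $A\subsetneq B$ implies $\mathcal{F}(A)<\mathcal{F}(B)$. A dilatate of $A$ is a set $\lambda A$ with $\lambda\geqslant0$; $\mathrm{conv}$ denotes convex hull. For $p>1$, $q$ is the Hölder conjugate ($1/p+1/q=1$); for nonempty $K,L$, $K+_pL=\{(1-\mu)^{1/q}x+\mu^{1/q}y: x\in K, y\in L, \mu\in[0,1]\}$ and $\lambda\cdot K=\lambda^{1/p}K$; for $p=1$ the coefficients $(1-\mu)^{1/q},\mu^{1/q}$ are interpreted as $1$, so $+_1$ is Minkowski addition. *)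

theory Defs
  imports "HOL-Analysis.Analysis"
begin

definition dil :: "real \<Rightarrow> 'a::real_vector set \<Rightarrow> 'a set" where
  "dil r A = (\<lambda>x. r *\<^sub>R x) ` A"

definition lincomb :: "real \<Rightarrow> 'a::real_vector set \<Rightarrow> real \<Rightarrow> 'a set \<Rightarrow> 'a set" where
  "lincomb a A b B = {a *\<^sub>R x + b *\<^sub>R y | x y. x \<in> A \<and> y \<in> B}"

definition hconj :: "real \<Rightarrow> real" where
  "hconj p = p / (p - 1)"

definition psum :: "real \<Rightarrow> 'a::real_vector set \<Rightarrow> 'a set \<Rightarrow> 'a set" where
  "psum p K L = (if p = 1 then {x + y | x y. x \<in> K \<and> y \<in> L}
     else {(1 - \<mu>) powr (1 / hconj p) *\<^sub>R x + \<mu> powr (1 / hconj p) *\<^sub>R y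
            | x y \<mu>. x \<in> K \<and> y \<in> L \<and> 0 \<le> \<mu> \<and> \<mu> \<le> 1})"

definition pscale :: "real \<Rightarrow> real \<Rightarrow> 'a::real_vector set \<Rightarrow> 'a set" where
  "pscale p l K = dil (l powr (1 / p)) K"

definition closed_lincomb :: "'a::real_vector set set \<Rightarrow> bool" where
  "closed_lincomb \<A> \<longleftrightarrow> (\<forall>A\<in>\<A>. \<forall>B\<in>\<A>. \<forall>a b. a \<ge> 0 \<and> b \<ge> 0 \<longrightarrow> lincomb a A b B \<in> \<A>)"

definition increasing_on :: "'a set set \<Rightarrow> ('a set \<Rightarrow> real) \<Rightarrow> bool" where
  "increasing_on \<A> F \<longleftrightarrow> (\<forall>A\<in>\<A>. \<forall>B\<in>\<A>. A \<subseteq> B \<longrightarrow> F A \<le> F B)"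

definition strictly_increasing_on :: "'a set set \<Rightarrow> ('a set \<Rightarrow> real) \<Rightarrow> bool" where
  "strictly_increasing_on \<A> F \<longleftrightarrow> (\<forall>A\<in>\<A>. \<forall>B\<in>\<A>. A \<subset> B \<longrightarrow> F A < F B)"

definition subhom :: "'a::real_vector set set \<Rightarrow> ('a set \<Rightarrow> real) \<Rightarrow> real \<Rightarrow> bool" where
  "subhom \<A> F \<alpha> \<longleftrightarrow> (\<forall>K\<in>\<A>. \<forall>r. r \<ge> 1 \<longrightarrow> F (dil r K) \<le> r powr (1 / \<alpha>) * F K)"

definition strict_subhom :: "'a::real_vector set set \<Rightarrow> ('a set \<Rightarrow> real) \<Rightarrow> real \<Rightarrow> bool" where
  "strict_subhom \<A> F \<alpha> \<longleftrightarrow> subhom \<A> F \<alpha> \<and>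
     (\<forall>K\<in>\<A>. \<forall>r. r > 1 \<and> F K > 0 \<longrightarrow> F (dil r K) < r powr (1 / \<alpha>) * F K)"

end

theory Submission imports Defs begin

lemma fermat_aux:
  fixes e A B m0 :: real
  assumes e: "0 < e" "e < 1" and m0: "0 < m0" "m0 < 1"
    and le: "\<forall>m. 0 \<le> m \<and> m \<le> 1 \<longrightarrow> (1-m) powr e * A + m powr e * B \<le> (1-m0) powr e * A + m0 powr e * B"
  shows "(1-m0) powr (e-1) * A = m0 powr (e-1) * B"
proof -
  let ?G = "\<lambda>m. (1-m) powr e * A + m powr e * B"
  have d: "(?G has_real_derivative (e * (1-m0) powr (e-1) * (-1)) * A + (e * m0 powr (e-1)) * B) (at m0)"
    using m0 by (auto intro!: derivative_eq_intros)
  have "(e * (1-m0) powr (e-1) * (-1)) * A + (e * m0 powr (e-1)) * B = 0"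
  proof (rule DERIV_local_max[OF d, of "min m0 (1-m0)"])
    show "0 < min m0 (1-m0)" using m0 by simp
    show "\<forall>y. \<bar>m0 - y\<bar> < min m0 (1 - m0) \<longrightarrow> ?G y \<le> ?G m0"
      using le by (auto simp: abs_if split: if_splits)
  qed
  then have "e * ((1-m0) powr (e-1) * A) = e * (m0 powr (e-1) * B)" by (simp add: algebra_simps) (metis mult.commute)
  then have "(1-m0) powr (e-1) * A = m0 powr (e-1) * B" using e by simp
  then show ?thesis .
qed


lemma sep_aux:
  fixes S :: "'a::euclidean_space set" and z :: 'a
  assumes "compact S" "z \<notin> convex hull S"
  shows "\<exists>\<theta>. \<forall>w\<in>S. inner \<theta> w < inner \<theta> z"
proof -
  have "convex (convex hull S)" "closed (convex hull S)"
    using assms compact_convex_hull compact_imp_closed by auto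
  then obtain a b where ab: "inner a z < b" "\<forall>x\<in>convex hull S. inner a x > b"
    using separating_hyperplane_closed_point assms(2) by blast
  show ?thesis
  proof (intro exI ballI)
    fix w assume "w \<in> S"
    then have "w \<in> convex hull S" by (simp add: hull_inc)
    then have "inner a w > b" using ab by auto
    then show "inner (-a) w < inner (-a) z" using ab by simp
  qed
qed

lemma geo:
  fixes K L :: "'a::euclidean_space set" and \<kappa> :: real
  assumes cK: "compact K" and cL: "compact L" and kp: "\<kappa> > 0"
    and H: "\<forall>\<theta>. \<exists>x\<in>K. \<exists>y\<in>L. (\<forall>z\<in>K. inner \<theta> z \<le> inner \<theta> x) \<and> (\<forall>z\<in>L. inner \<theta> z \<le> inner \<theta> y)
              \<and> 0 \<le> inner \<theta> x \<and> inner \<theta> y = \<kappa> * inner \<theta> x"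
  shows "0 \<in> convex hull K \<and> 0 \<in> convex hull L \<and> convex hull L = dil \<kappa> (convex hull K)"
proof (intro conjI)
  show "0 \<in> convex hull K"
  proof (rule ccontr)
    assume "0 \<notin> convex hull K"
    then obtain \<theta> where th: "\<forall>w\<in>K. inner \<theta> w < 0" using sep_aux[OF cK] by fastforce
    from H obtain x where "x \<in> K" "0 \<le> inner \<theta> x" by blast
    then show False using th by fastforce
  qed
  show "0 \<in> convex hull L"
  proof (rule ccontr)
    assume "0 \<notin> convex hull L"
    then obtain \<theta> where th: "\<forall>w\<in>L. inner \<theta> w < 0" using sep_aux[OF cL] by fastforce
    from H obtain x y where "y \<in> L" "0 \<le> inner \<theta> x" "inner \<theta> y = \<kappa> * inner \<theta> x" by blast
    then show False using th kp by (metis mult_nonneg_nonneg less_le_not_le less_imp_le)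
  qed
  have cKs: "compact (dil \<kappa> K)" "compact (dil (1/\<kappa>) L)" unfolding dil_def
    using cK cL by (auto intro!: compact_scaling)
  have L1: "L \<subseteq> convex hull (dil \<kappa> K)"
  proof
    fix z assume z: "z \<in> L"
    show "z \<in> convex hull (dil \<kappa> K)"
    proof (rule ccontr)
      assume "z \<notin> convex hull (dil \<kappa> K)"
      then obtain \<theta> where th: "\<forall>w\<in>dil \<kappa> K. inner \<theta> w < inner \<theta> z" using sep_aux[OF cKs(1)] by blast
      from H obtain x y where xy: "x \<in> K" "y \<in> L" "\<forall>z\<in>L. inner \<theta> z \<le> inner \<theta> y" "inner \<theta> y = \<kappa> * inner \<theta> x" by blast
      have "\<kappa> *\<^sub>R x \<in> dil \<kappa> K" using xy unfolding dil_def by auto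
      then have "\<kappa> * inner \<theta> x < inner \<theta> z" using th by fastforce
      moreover have "inner \<theta> z \<le> inner \<theta> y" using xy z by auto
      ultimately show False using xy by simp
    qed
  qed
  have K1: "K \<subseteq> convex hull (dil (1/\<kappa>) L)"
  proof
    fix z assume z: "z \<in> K"
    show "z \<in> convex hull (dil (1/\<kappa>) L)"
    proof (rule ccontr)
      assume "z \<notin> convex hull (dil (1/\<kappa>) L)"
      then obtain \<theta> where th: "\<forall>w\<in>dil (1/\<kappa>) L. inner \<theta> w < inner \<theta> z" using sep_aux[OF cKs(2)] by blast
      from H obtain x y where xy: "x \<in> K" "y \<in> L" "\<forall>z\<in>K. inner \<theta> z \<le> inner \<theta> x" "inner \<theta> y = \<kappa> * inner \<theta> x" by blast
      have "(1/\<kappa>) *\<^sub>R y \<in> dil (1/\<kappa>) L" using xy unfolding dil_def by auto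
      then have "(1/\<kappa>) * inner \<theta> y < inner \<theta> z" using th by fastforce
      moreover have "inner \<theta> z \<le> inner \<theta> x" using xy z by auto
      ultimately show False using xy kp by simp
    qed
  qed
  have "convex hull L \<subseteq> convex hull (dil \<kappa> K)"
    using L1 by (simp add: hull_minimal)
  moreover have "convex hull K \<subseteq> convex hull (dil (1/\<kappa>) L)"
    using K1 by (simp add: hull_minimal)
  then have "dil \<kappa> (convex hull K) \<subseteq> dil \<kappa> (convex hull (dil (1/\<kappa>) L))"
    unfolding dil_def by auto
  moreover have "dil \<kappa> (convex hull (dil (1/\<kappa>) L)) = convex hull L"
    unfolding dil_def convex_hull_scaling[symmetric] image_comp o_def using kp by simp
  moreover have "convex hull (dil \<kappa> K) = dil \<kappa> (convex hull K)"
    unfolding dil_def convex_hull_scaling by simp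
  ultimately show "convex hull L = dil \<kappa> (convex hull K)" by auto
qed


lemma attains:
  fixes K :: "'a::euclidean_space set"
  assumes "compact K" "K \<noteq> {}"
  shows "\<exists>x\<in>K. \<forall>z\<in>K. inner \<theta> z \<le> inner \<theta> x"
proof -
  have "compact ((\<lambda>x. inner \<theta> x) ` K)"
    using assms by (intro compact_continuous_image continuous_intros)
  then obtain s where "s \<in> (\<lambda>x. inner \<theta> x) ` K" "\<forall>t\<in>(\<lambda>x. inner \<theta> x) ` K. t \<le> s"
    using compact_attains_sup assms by (metis image_is_empty)
  then show ?thesis by auto
qed

lemma supp_part:
  fixes K L :: "'a::euclidean_space set" and e m0 a b :: real
  assumes cK: "compact K" "K \<noteq> {}" and cL: "compact L" "L \<noteq> {}"
    and e: "0 < e" "e < 1" and m0: "0 < m0" "m0 < 1" and ab: "a > 0" "b > 0"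
    and P: "\<forall>x\<in>K. \<forall>y\<in>L. \<forall>\<mu>. 0 \<le> \<mu> \<and> \<mu> \<le> 1 \<longrightarrow>
        (1-\<mu>) powr e *\<^sub>R (a *\<^sub>R x) + \<mu> powr e *\<^sub>R (b *\<^sub>R y) \<in> lincomb ((1-m0) powr e * a) K (m0 powr e * b) L"
  shows "\<forall>\<theta>. \<exists>x\<in>K. \<exists>y\<in>L. (\<forall>z\<in>K. inner \<theta> z \<le> inner \<theta> x) \<and> (\<forall>z\<in>L. inner \<theta> z \<le> inner \<theta> y)
              \<and> 0 \<le> inner \<theta> x \<and> inner \<theta> y = ((1-m0) powr (e-1) * a / (m0 powr (e-1) * b)) * inner \<theta> x"
proof
  fix \<theta> :: 'a
  obtain x where x: "x \<in> K" "\<forall>z\<in>K. inner \<theta> z \<le> inner \<theta> x" using attains[OF cK] by blast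
  obtain y where y: "y \<in> L" "\<forall>z\<in>L. inner \<theta> z \<le> inner \<theta> y" using attains[OF cL] by blast
  define hK where "hK = inner \<theta> x"
  define hL where "hL = inner \<theta> y"
  have c1p: "(1-m0) powr e * a \<ge> 0" "m0 powr e * b \<ge> 0" using ab by auto
  have le: "(1-\<mu>) powr e * (a * hK) + \<mu> powr e * (b * hL) \<le> (1-m0) powr e * (a * hK) + m0 powr e * (b * hL)"
    if "0 \<le> \<mu>" "\<mu> \<le> 1" for \<mu>
  proof -
    have "(1-\<mu>) powr e *\<^sub>R (a *\<^sub>R x) + \<mu> powr e *\<^sub>R (b *\<^sub>R y) \<in> lincomb ((1-m0) powr e * a) K (m0 powr e * b) L"
      using P x y that by blast
    then obtain x' y' where xy': "x' \<in> K" "y' \<in> L"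
      "(1-\<mu>) powr e *\<^sub>R (a *\<^sub>R x) + \<mu> powr e *\<^sub>R (b *\<^sub>R y) = ((1-m0) powr e * a) *\<^sub>R x' + (m0 powr e * b) *\<^sub>R y'"
      unfolding lincomb_def by blast
    have "(1-\<mu>) powr e * (a * hK) + \<mu> powr e * (b * hL) = inner \<theta> ((1-\<mu>) powr e *\<^sub>R (a *\<^sub>R x) + \<mu> powr e *\<^sub>R (b *\<^sub>R y))"
      unfolding hK_def hL_def by (simp add: inner_add_right)
    also have "\<dots> = ((1-m0) powr e * a) * inner \<theta> x' + (m0 powr e * b) * inner \<theta> y'"
      using xy'(3) by (simp add: inner_add_right)
    also have "\<dots> \<le> ((1-m0) powr e * a) * hK + (m0 powr e * b) * hL"
      unfolding hK_def hL_def using x y xy' c1p by (intro add_mono mult_left_mono) auto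
    finally show ?thesis by (simp add: algebra_simps)
  qed
  have F: "(1-m0) powr (e-1) * (a * hK) = m0 powr (e-1) * (b * hL)"
    using fermat_aux[OF e m0] le by blast
  have pos: "m0 powr (e-1) * b > 0" using m0 ab by simp
  have hL: "hL = ((1-m0) powr (e-1) * a / (m0 powr (e-1) * b)) * hK"
    using F pos m0 ab by (simp add: field_simps)
  have hK0: "0 \<le> hK"
  proof (rule ccontr)
    assume neg: "\<not> 0 \<le> hK"
    have "a * hK \<le> (1-m0) powr e * (a * hK) + m0 powr e * (b * hL)" using le[of 0] by simp
    also have "m0 powr e * (b * hL) = m0 * (m0 powr (e-1) * (b * hL))"
      using m0 by (simp add: powr_diff field_simps)
    also have "(1-m0) powr e = (1-m0) * (1-m0) powr (e-1)"
      using m0 by (simp add: powr_diff field_simps)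
    finally have "a * hK \<le> (1-m0) * ((1-m0) powr (e-1) * (a * hK)) + m0 * (m0 powr (e-1) * (b * hL))"
      by (simp add: algebra_simps)
    then have "a * hK \<le> (1-m0) * ((1-m0) powr (e-1) * (a * hK)) + m0 * ((1-m0) powr (e-1) * (a * hK))"
      using F by simp
    then have "a * hK \<le> (1-m0) powr (e-1) * (a * hK)" by (simp add: algebra_simps)
    moreover have "(1-m0) powr (e-1) > 1" using m0 e powr_less_mono2_neg[of "e-1" "1-m0" 1] by simp
    moreover have "a * hK < 0" using neg ab by (simp add: mult_pos_neg)
    ultimately show False by (smt (verit) mult_less_cancel_right2)
  qed
  show "\<exists>x\<in>K. \<exists>y\<in>L. (\<forall>z\<in>K. inner \<theta> z \<le> inner \<theta> x) \<and> (\<forall>z\<in>L. inner \<theta> z \<le> inner \<theta> y)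
              \<and> 0 \<le> inner \<theta> x \<and> inner \<theta> y = ((1-m0) powr (e-1) * a / (m0 powr (e-1) * b)) * inner \<theta> x"
    using x y hK0 hL unfolding hK_def hL_def by blast
qed


lemma dil_lincomb: "dil r (lincomb x A y B) = lincomb (r*x) A (r*y) B"
  unfolding dil_def lincomb_def by (auto simp: scaleR_add_right image_iff; force simp: scaleR_add_right)

lemma core:
  fixes \<A> :: "'a::euclidean_space set set"
    and F :: "'a set \<Rightarrow> real"
    and \<alpha> C p t :: real
    and K L :: "'a set"
  assumes closed: "closed_lincomb \<A>"
    and Fnonneg: "\<forall>A\<in>\<A>. F A \<ge> 0"
    and Finc: "increasing_on \<A> F"
    and alpha_pos: "\<alpha> > 0"
    and Fsub: "subhom \<A> F \<alpha>"
    and KA: "K \<in> \<A>" and LA: "L \<in> \<A>"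
    and FKL: "F K * F L > 0"
    and C_pos: "C > 0"
    and BM: "\<forall>t. 0 < t \<and> t < 1 \<longrightarrow>
       F (lincomb (1 - t) K t L)
         \<ge> C * ((1 - t) * F K powr \<alpha> + t * F L powr \<alpha>) powr (1 / \<alpha>)"
    and p: "p > 1" and t: "0 < t" "t < 1"
    and PA: "psum p (pscale p (1 - t) K) (pscale p t L) \<in> \<A>"
  shows "\<exists>m0 c1 c2. 0 < m0 \<and> m0 < 1 \<and> c1 = (1-m0) powr (1/hconj p) * (1-t) powr (1/p)
     \<and> c2 = m0 powr (1/hconj p) * t powr (1/p) \<and> c1 + c2 \<le> 1
     \<and> lincomb c1 K c2 L \<in> \<A> \<and> lincomb c1 K c2 L \<subseteq> psum p (pscale p (1 - t) K) (pscale p t L)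
     \<and> C * ((1 - t) * F K powr (p * \<alpha>) + t * F L powr (p * \<alpha>)) powr (1 / (p * \<alpha>)) \<le> F (lincomb c1 K c2 L)
     \<and> (F (lincomb c1 K c2 L) = C * ((1 - t) * F K powr (p * \<alpha>) + t * F L powr (p * \<alpha>)) powr (1 / (p * \<alpha>))
        \<longrightarrow> (0 < c2/(c1+c2) \<and> c2/(c1+c2) < 1 \<and> F (lincomb (1 - c2/(c1+c2)) K (c2/(c1+c2)) L)
                 = C * ((1 - c2/(c1+c2)) * F K powr \<alpha> + c2/(c1+c2) * F L powr \<alpha>) powr (1 / \<alpha>))
          \<and> (strict_subhom \<A> F \<alpha> \<longrightarrow> c1 + c2 = 1))"
proof -
  define e where "e = 1 / hconj p"
  have e1: "e = 1 - 1/p" using p unfolding e_def hconj_def by (simp add: field_simps)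
  have e: "0 < e" "e < 1" using p unfolding e1 by auto
  have pe: "p * e + 1 = p" using p e1 by (simp add: field_simps)
  have FK: "F K > 0" and FL: "F L > 0" using FKL Fnonneg KA LA
    by (metis less_eq_real_def mult_eq_0_iff zero_less_mult_pos zero_less_mult_pos2)+
  define X where "X = F K powr \<alpha>"
  define Y where "Y = F L powr \<alpha>"
  have XY: "X > 0" "Y > 0" using FK FL unfolding X_def Y_def by auto
  define a where "a = (1-t) powr (1/p)"
  define b where "b = t powr (1/p)"
  have ab: "a > 0" "b > 0" using t unfolding a_def b_def by auto
  define u where "u = a * X"
  define v where "v = b * Y"
  have uv: "u > 0" "v > 0" using ab XY unfolding u_def v_def by auto
  define D where "D = u powr p + v powr p"
  have D: "D > 0" using uv unfolding D_def by (simp add: add_pos_pos)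
  define m0 where "m0 = v powr p / D"
  have m0: "0 < m0" "m0 < 1" using uv D unfolding m0_def D_def by (auto simp: field_simps)
  have m01: "1 - m0 = u powr p / D" using D unfolding m0_def D_def by (simp add: field_simps)
  define c1 where "c1 = (1-m0) powr e * a"
  define c2 where "c2 = m0 powr e * b"
  have c: "c1 > 0" "c2 > 0" using m0 ab unfolding c1_def c2_def by auto
  have K1a: "c1 * X = u powr p / D powr e"
  proof -
    have "c1 * X = (u powr p / D) powr e * u" unfolding c1_def m01 u_def by simp
    also have "\<dots> = u powr (p*e) / D powr e * u" using uv D by (simp add: powr_divide powr_powr)
    also have "\<dots> = u powr (p*e + 1) / D powr e" using uv by (simp add: powr_add)
    finally show ?thesis using pe by simp
  qed
  have K1b: "c2 * Y = v powr p / D powr e"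
  proof -
    have "c2 * Y = (v powr p / D) powr e * v" unfolding c2_def m0_def v_def by simp
    also have "\<dots> = v powr (p*e) / D powr e * v" using uv D by (simp add: powr_divide powr_powr)
    also have "\<dots> = v powr (p*e + 1) / D powr e" using uv by (simp add: powr_add)
    finally show ?thesis using pe by simp
  qed
  have K1: "c1 * X + c2 * Y = D powr (1/p)"
  proof -
    have "c1 * X + c2 * Y = D / D powr e" using K1a K1b unfolding D_def by (simp add: add_divide_distrib)
    also have "\<dots> = D powr (1 - e)" using D by (simp add: powr_diff)
    finally show ?thesis using e1 by simp
  qed
  have K2: "D = (1 - t) * F K powr (p * \<alpha>) + t * F L powr (p * \<alpha>)"
  proof -
    have "u powr p = (1-t) * F K powr (p * \<alpha>)"
      unfolding u_def a_def X_def using t p FK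
      by (simp add: powr_mult powr_powr mult.commute)
    moreover have "v powr p = t * F L powr (p * \<alpha>)"
      unfolding v_def b_def Y_def using t p FL
      by (simp add: powr_mult powr_powr mult.commute)
    ultimately show ?thesis unfolding D_def by simp
  qed
  define RHS where "RHS = C * ((1 - t) * F K powr (p * \<alpha>) + t * F L powr (p * \<alpha>)) powr (1 / (p * \<alpha>))"
  have RHS: "RHS = C * (c1 * X + c2 * Y) powr (1/\<alpha>)"
    unfolding RHS_def K1 K2[symmetric] using D by (simp add: powr_powr)
  define s where "s = c1 + c2"
  have s0: "s > 0" using c unfolding s_def by simp
  have s1: "s \<le> 1"
  proof -
    have "c1 \<le> e * (1-m0) + (1-e) * (1-t)"
      unfolding c1_def a_def e1 using Youngs_inequality_0[of e "1-e" "1-m0" "1-t"] e m0 t e1 by simp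
    moreover have "c2 \<le> e * m0 + (1-e) * t"
      unfolding c2_def b_def e1 using Youngs_inequality_0[of e "1-e" "m0" "t"] e m0 t e1 by simp
    ultimately show ?thesis unfolding s_def by (simp add: algebra_simps)
  qed
  define lam where "lam = c2 / s"
  have lam: "0 < lam" "lam < 1" using c s0 unfolding lam_def s_def by (auto simp: field_simps)
  have lam1: "1 - lam = c1 / s" using s0 unfolding lam_def s_def by (simp add: field_simps)
  define M where "M = lincomb (1-lam) K lam L"
  define sM where "sM = lincomb c1 K c2 L"
  have MA: "M \<in> \<A>" using closed KA LA lam unfolding M_def closed_lincomb_def by auto
  have sMA: "sM \<in> \<A>" using closed KA LA c unfolding sM_def closed_lincomb_def by auto
  have dilsM: "dil (1/s) sM = M" unfolding sM_def M_def dil_lincomb lam1 unfolding lam_def by simp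
  have sub1: "F M \<le> (1/s) powr (1/\<alpha>) * F sM"
    using Fsub sMA s0 s1 dilsM unfolding subhom_def by (metis le_divide_eq_1_pos)
  have spow: "s powr (1/\<alpha>) * (1/s) powr (1/\<alpha>) = 1" using s0 by (simp add: powr_mult[symmetric])
  have sub2: "s powr (1/\<alpha>) * F M \<le> F sM"
  proof -
    have "s powr (1/\<alpha>) * F M \<le> s powr (1/\<alpha>) * ((1/s) powr (1/\<alpha>) * F sM)"
      using sub1 by (simp add: mult_left_mono)
    also have "\<dots> = F sM" using spow by (simp add: mult.assoc[symmetric])
    finally show ?thesis .
  qed
  define W where "W = (1 - lam) * X + lam * Y"
  have W: "W > 0" using lam XY unfolding W_def by (simp add: add_pos_pos)
  have bm: "C * W powr (1/\<alpha>) \<le> F M" using BM lam unfolding M_def W_def X_def Y_def by blast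
  have sW: "s * W = c1 * X + c2 * Y"
  proof -
    have "s * W = (s*(c1/s))*X + (s*(c2/s))*Y" unfolding W_def lam1 unfolding lam_def by (simp add: algebra_simps)
    then show ?thesis using s0 by simp
  qed
  have RHS2: "RHS = s powr (1/\<alpha>) * (C * W powr (1/\<alpha>))"
    unfolding RHS sW[symmetric] using s0 W by (simp add: powr_mult)
  have spos: "s powr (1/\<alpha>) > 0" using s0 by simp
  have chain: "RHS \<le> s powr (1/\<alpha>) * F M" unfolding RHS2 using bm spos by (simp add: mult_left_mono)
  have main: "RHS \<le> F sM" using chain sub2 by linarith
  have sub_psum: "sM \<subseteq> psum p (pscale p (1 - t) K) (pscale p t L)"
  proof
    fix z assume "z \<in> sM"
    then obtain x y where xy: "x \<in> K" "y \<in> L" "z = c1 *\<^sub>R x + c2 *\<^sub>R y" unfolding sM_def lincomb_def by blast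
    have pn: "p \<noteq> 1" "0 \<le> m0" "m0 \<le> 1" using p m0 by auto
    have "a *\<^sub>R x \<in> pscale p (1 - t) K" using xy unfolding pscale_def dil_def a_def by auto
    moreover have "b *\<^sub>R y \<in> pscale p t L" using xy unfolding pscale_def dil_def b_def by auto
    moreover have "z = (1 - m0) powr e *\<^sub>R (a *\<^sub>R x) + m0 powr e *\<^sub>R (b *\<^sub>R y)"
      using xy unfolding c1_def c2_def by simp
    ultimately show "z \<in> psum p (pscale p (1 - t) K) (pscale p t L)"
    unfolding psum_def e_def using pn by (simp only: if_False) blast
  qed
  have eqpart: "(0 < lam \<and> lam < 1 \<and> F M = C * W powr (1/\<alpha>))
          \<and> (strict_subhom \<A> F \<alpha> \<longrightarrow> s = 1)" if eq: "F sM = RHS"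
  proof (intro conjI impI)
    show "0 < lam" "lam < 1" using lam by auto
    have "s powr (1/\<alpha>) * F M \<le> s powr (1/\<alpha>) * (C * W powr (1/\<alpha>))"
      using sub2 eq RHS2 by simp
    then have "F M \<le> C * W powr (1/\<alpha>)" using spos by simp
    then show "F M = C * W powr (1/\<alpha>)" using bm by simp
    assume ss: "strict_subhom \<A> F \<alpha>"
    show "s = 1"
    proof (rule ccontr)
      assume "s \<noteq> 1"
      then have "1/s > 1" using s0 s1 by simp
      moreover have "F sM > 0" proof -
        have "c1 * X + c2 * Y > 0" using c XY by (simp add: add_pos_pos)
        then show ?thesis using eq C_pos unfolding RHS by simp
      qed
      ultimately have "F M < (1/s) powr (1/\<alpha>) * F sM"
        using ss sMA dilsM unfolding strict_subhom_def by metis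
      then have "s powr (1/\<alpha>) * F M < s powr (1/\<alpha>) * ((1/s) powr (1/\<alpha>) * F sM)"
        using spos by simp
      also have "\<dots> = F sM" using spow by (simp add: mult.assoc[symmetric])
      finally show False using chain eq by simp
    qed
  qed
  show ?thesis
    apply (rule exI[of _ m0], rule exI[of _ c1], rule exI[of _ c2])
    using m0 s1 sMA sub_psum main eqpart
    unfolding c1_def c2_def e_def a_def b_def s_def sM_def RHS_def lam_def M_def W_def X_def Y_def
    by blast
qed


lemma young2:
  fixes m t e :: real
  assumes "0 \<le> m" "m \<le> 1" "0 < t" "t < 1" "0 < e" "e < 1"
  shows "(1-m) powr e * (1-t) powr (1-e) + m powr e * t powr (1-e) \<le> 1"
proof (cases "m = 0 \<or> m = 1")
  case True
  have "(1-t) powr (1-e) \<le> 1" "t powr (1-e) \<le> 1" using assms powr_mono2[of "1-e" "1-t" 1] powr_mono2[of "1-e" t 1] by auto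
  then show ?thesis using True by auto
next
  case False
  then have m: "0 < m" "m < 1" using assms by auto
  have "(1-m) powr e * (1-t) powr (1-e) \<le> e * (1-m) + (1-e) * (1-t)"
    using Youngs_inequality_0[of e "1-e" "1-m" "1-t"] assms m by simp
  moreover have "m powr e * t powr (1-e) \<le> e * m + (1-e) * t"
    using Youngs_inequality_0[of e "1-e" "m" "t"] assms m by simp
  ultimately show ?thesis by (simp add: algebra_simps)
qed

theorem mainTheorem3:
  fixes \<A> :: "'a::euclidean_space set set"
    and F :: "'a set \<Rightarrow> real"
    and \<alpha> C :: real
    and K L :: "'a set"
  assumes nonempty: "\<forall>A\<in>\<A>. A \<noteq> {}"
    and closed: "closed_lincomb \<A>"
    and Fnonneg: "\<forall>A\<in>\<A>. F A \<ge> 0"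
    and Finc: "increasing_on \<A> F"
    and alpha_pos: "\<alpha> > 0"
    and Fsub: "subhom \<A> F \<alpha>"
    and KA: "K \<in> \<A>" and LA: "L \<in> \<A>"
    and FKL: "F K * F L > 0"
    and C_pos: "C > 0"
    and BM: "\<forall>t. 0 < t \<and> t < 1 \<longrightarrow>
       F (lincomb (1 - t) K t L)
         \<ge> C * ((1 - t) * F K powr \<alpha> + t * F L powr \<alpha>) powr (1 / \<alpha>)"
  shows "(\<forall>p t. p \<ge> 1 \<and> 0 < t \<and> t < 1
            \<and> psum p (pscale p (1 - t) K) (pscale p t L) \<in> \<A> \<longrightarrow>
            F (psum p (pscale p (1 - t) K) (pscale p t L))
              \<ge> C * ((1 - t) * F K powr (p * \<alpha>) + t * F L powr (p * \<alpha>)) powr (1 / (p * \<alpha>)))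
       \<and> (\<forall>p t. p > 1 \<and> 0 < t \<and> t < 1
            \<and> psum p (pscale p (1 - t) K) (pscale p t L) \<in> \<A>
            \<and> F (psum p (pscale p (1 - t) K) (pscale p t L))
              = C * ((1 - t) * F K powr (p * \<alpha>) + t * F L powr (p * \<alpha>)) powr (1 / (p * \<alpha>))
          \<longrightarrow>
            (\<exists>\<mu>. 0 < \<mu> \<and> \<mu> < 1 \<and>
               F (lincomb (1 - \<mu>) K \<mu> L)
                 = C * ((1 - \<mu>) * F K powr \<alpha> + \<mu> * F L powr \<alpha>) powr (1 / \<alpha>))
          \<and> (strictly_increasing_on \<A> F \<and> compact K \<and> compact L \<longrightarrow>
               0 \<in> convex hull K \<and> 0 \<in> convex hull L
             \<and> (\<exists>r\<ge>0. convex hull K = dil r (convex hull L)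
                      \<or> convex hull L = dil r (convex hull K))
             \<and> (strict_subhom \<A> F \<alpha> \<longrightarrow> convex hull K = convex hull L)))"
proof (intro conjI allI impI)
  note core' = core[OF closed Fnonneg Finc alpha_pos Fsub KA LA FKL C_pos BM]
  fix p t :: real
  assume H: "1 \<le> p \<and> 0 < t \<and> t < 1 \<and> psum p (pscale p (1 - t) K) (pscale p t L) \<in> \<A>"
  show "C * ((1 - t) * F K powr (p * \<alpha>) + t * F L powr (p * \<alpha>)) powr (1 / (p * \<alpha>))
        \<le> F (psum p (pscale p (1 - t) K) (pscale p t L))"
  proof (cases "p = 1")
    case True
    have "psum p (pscale p (1 - t) K) (pscale p t L) = lincomb (1 - t) K t L"
      using True H unfolding psum_def pscale_def dil_def lincomb_def by auto
    then show ?thesis using BM H True by simp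
  next
    case False
    then have p: "p > 1" using H by simp
    obtain m0 c1 c2 where mc: "lincomb c1 K c2 L \<in> \<A>"
      "lincomb c1 K c2 L \<subseteq> psum p (pscale p (1 - t) K) (pscale p t L)"
      "C * ((1 - t) * F K powr (p * \<alpha>) + t * F L powr (p * \<alpha>)) powr (1 / (p * \<alpha>)) \<le> F (lincomb c1 K c2 L)"
      using core'[OF p] H by blast
    have "F (lincomb c1 K c2 L) \<le> F (psum p (pscale p (1 - t) K) (pscale p t L))"
      using Finc mc H unfolding increasing_on_def by blast
    then show ?thesis using mc by linarith
  qed
next
  note core' = core[OF closed Fnonneg Finc alpha_pos Fsub KA LA FKL C_pos BM]
  fix p t :: real
  define P where "P = psum p (pscale p (1 - t) K) (pscale p t L)"
  define RHS where "RHS = C * ((1 - t) * F K powr (p * \<alpha>) + t * F L powr (p * \<alpha>)) powr (1 / (p * \<alpha>))"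
  assume H0: "1 < p \<and> 0 < t \<and> t < 1 \<and> psum p (pscale p (1 - t) K) (pscale p t L) \<in> \<A> \<and>
       F (psum p (pscale p (1 - t) K) (pscale p t L)) =
       C * ((1 - t) * F K powr (p * \<alpha>) + t * F L powr (p * \<alpha>)) powr (1 / (p * \<alpha>))"
  then have p: "p > 1" and t: "0 < t" "t < 1" and PA: "P \<in> \<A>" and Peq: "F P = RHS"
    unfolding P_def RHS_def by auto
  obtain m0 c1 c2 where m0: "0 < m0" "m0 < 1"
    and c1: "c1 = (1-m0) powr (1/hconj p) * (1-t) powr (1/p)"
    and c2: "c2 = m0 powr (1/hconj p) * t powr (1/p)" and s1: "c1 + c2 \<le> 1"
    and sMA: "lincomb c1 K c2 L \<in> \<A>" and sub: "lincomb c1 K c2 L \<subseteq> P"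
    and ge: "RHS \<le> F (lincomb c1 K c2 L)"
    and eqp: "F (lincomb c1 K c2 L) = RHS
        \<longrightarrow> (0 < c2/(c1+c2) \<and> c2/(c1+c2) < 1 \<and> F (lincomb (1 - c2/(c1+c2)) K (c2/(c1+c2)) L)
                 = C * ((1 - c2/(c1+c2)) * F K powr \<alpha> + c2/(c1+c2) * F L powr \<alpha>) powr (1 / \<alpha>))
          \<and> (strict_subhom \<A> F \<alpha> \<longrightarrow> c1 + c2 = 1)"
    using core'[OF p t] H0 unfolding P_def RHS_def by metis
  have "F (lincomb c1 K c2 L) \<le> F P" using Finc sMA PA sub unfolding increasing_on_def by blast
  then have eqs: "F (lincomb c1 K c2 L) = RHS" using ge Peq by linarith
  show "\<exists>\<mu>::real. 0 < \<mu> \<and> \<mu> < 1 \<and> F (lincomb (1 - \<mu>) K \<mu> L) = C * ((1 - \<mu>) * F K powr \<alpha> + \<mu> * F L powr \<alpha>) powr (1 / \<alpha>)"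
    using eqp eqs by blast
  assume SI: "strictly_increasing_on \<A> F \<and> compact K \<and> compact L"
  have PsM: "P = lincomb c1 K c2 L"
  proof (rule ccontr)
    assume "P \<noteq> lincomb c1 K c2 L"
    then have "lincomb c1 K c2 L \<subset> P" using sub by auto
    then have "F (lincomb c1 K c2 L) < F P" using SI sMA PA unfolding strictly_increasing_on_def by blast
    then show False using eqs Peq by simp
  qed
  define e where "e = 1 / hconj p"
  have e1: "e = 1 - 1/p" using p unfolding e_def hconj_def by (simp add: field_simps)
  have e: "0 < e" "e < 1" using p unfolding e1 by auto
  define a where "a = (1-t) powr (1/p)"
  define b where "b = t powr (1/p)"
  have ab: "a > 0" "b > 0" using t unfolding a_def b_def by auto
  have Kne: "K \<noteq> {}" and Lne: "L \<noteq> {}" using nonempty KA LA by auto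
  have Pin: "\<forall>x\<in>K. \<forall>y\<in>L. \<forall>\<mu>::real. 0 \<le> \<mu> \<and> \<mu> \<le> 1 \<longrightarrow>
        (1-\<mu>) powr e *\<^sub>R (a *\<^sub>R x) + \<mu> powr e *\<^sub>R (b *\<^sub>R y) \<in> lincomb ((1-m0) powr e * a) K (m0 powr e * b) L"
  proof (intro ballI allI impI)
    fix x y and \<mu> :: real assume xy: "x \<in> K" "y \<in> L" "0 \<le> \<mu> \<and> \<mu> \<le> 1"
    have pn: "p \<noteq> 1" using p by simp
    have "a *\<^sub>R x \<in> pscale p (1 - t) K" using xy unfolding pscale_def dil_def a_def by auto
    moreover have "b *\<^sub>R y \<in> pscale p t L" using xy unfolding pscale_def dil_def b_def by auto
    ultimately have "(1-\<mu>) powr e *\<^sub>R (a *\<^sub>R x) + \<mu> powr e *\<^sub>R (b *\<^sub>R y) \<in> P"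
      unfolding P_def psum_def e_def using pn xy by (simp only: if_False) blast
    then show "(1-\<mu>) powr e *\<^sub>R (a *\<^sub>R x) + \<mu> powr e *\<^sub>R (b *\<^sub>R y) \<in> lincomb ((1-m0) powr e * a) K (m0 powr e * b) L"
      using PsM c1 c2 unfolding e_def a_def b_def by simp
  qed
  define \<kappa> where "\<kappa> = (1-m0) powr (e-1) * a / (m0 powr (e-1) * b)"
  have kp: "\<kappa> > 0" unfolding \<kappa>_def using m0 ab by simp
  have G: "0 \<in> convex hull K \<and> 0 \<in> convex hull L \<and> convex hull L = dil \<kappa> (convex hull K)"
    using geo[OF _ _ kp] supp_part[OF _ Kne _ Lne e m0 ab Pin] SI unfolding \<kappa>_def by blast
  then show "0 \<in> convex hull K" "0 \<in> convex hull L" by auto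
  show "\<exists>r\<ge>0. convex hull K = dil r (convex hull L) \<or> convex hull L = dil r (convex hull K)"
    using G kp less_imp_le by blast
  assume SS: "strict_subhom \<A> F \<alpha>"
  then have s1': "c1 + c2 = 1" using eqp eqs by blast
  have "\<forall>m. 0 \<le> m \<and> m \<le> 1 \<longrightarrow> (1-m) powr e * a + m powr e * b \<le> (1-m0) powr e * a + m0 powr e * b"
  proof (intro allI impI)
    fix m :: real assume "0 \<le> m \<and> m \<le> 1"
    then have "(1-m) powr e * a + m powr e * b \<le> 1"
      using young2[of m t e] t e unfolding a_def b_def e1 by simp
    then show "(1-m) powr e * a + m powr e * b \<le> (1-m0) powr e * a + m0 powr e * b"
      using s1' c1 c2 unfolding e_def a_def b_def by simp
  qed
  then have "(1-m0) powr (e-1) * a = m0 powr (e-1) * b" using fermat_aux[OF e m0] by blast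
  then have "\<kappa> = 1" unfolding \<kappa>_def using m0 ab by simp
  then show "convex hull K = convex hull L" using G unfolding dil_def by simp
qed

thm_deps mainTheorem3

end
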